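(* Let $d$ be a positive integer and let $P = \{x\in\mathbb{R}^d : Ax \le \mathbf{1}\}$ (for a real matrix $A$ with $d$ columns, $\mathbf{1}$ the all-ones vector) satisfy $P\cap\mathbb{Z}^d = \lozenge_d$. Then $Q = \{(x,y)\in\mathbb{R}^{d+1} : A(x - y e_1)\le\mathbf{1},\ -1\le x_1+y\le 1\}$ satisfies $Q \cap \mathbb{Z}^{d+1} = \lozenge_{d+1}$.
   Context: $\lozenge_d = \{0,\pm e_1,\dots,\pm e_d\}\subseteq\mathbb{Z}^d$ is the discrete standard crosspolytope, with $e_i$ the standard unit vectors; in $\mathbb{R}^{d+1}$ a point is written $(x,y)$ with $x\in\mathbb{R}^d$, $y\in\mathbb{R}$, so $\lozenge_{d+1} = (\lozenge_d\times\{0\})\cup\{(0,\pm1)\}$. *)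

theory Defs
  imports Complex_Main
begin

text \<open>Points of R^d are encoded as functions nat => real that vanish at all
  indices >= d; coordinate i (0-based) corresponds to x_(i+1).
  In R^(d+1), a point (x,y) has x in coordinates 0..d-1 and y in coordinate d.\<close>

definition unitv :: "nat \<Rightarrow> nat \<Rightarrow> int" where
  "unitv i = (\<lambda>j. if j = i then 1 else 0)"

definition crosspolytope :: "nat \<Rightarrow> (nat \<Rightarrow> int) set" where
  "crosspolytope d = {\<lambda>_. 0} \<union> {unitv i | i. i < d} \<union> {(\<lambda>j. - unitv i j) | i. i < d}"

definition lattice_points :: "nat \<Rightarrow> (nat \<Rightarrow> real) set \<Rightarrow> (nat \<Rightarrow> int) set" where
  "lattice_points d S = {z. (\<forall>i\<ge>d. z i = 0) \<and> (\<lambda>i. real_of_int (z i)) \<in> S}"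

definition polyP :: "nat \<Rightarrow> nat \<Rightarrow> (nat \<Rightarrow> nat \<Rightarrow> real) \<Rightarrow> (nat \<Rightarrow> real) set" where
  "polyP m d A = {x. (\<forall>i\<ge>d. x i = 0) \<and> (\<forall>r<m. (\<Sum>j<d. A r j * x j) \<le> 1)}"

definition polyQ :: "nat \<Rightarrow> nat \<Rightarrow> (nat \<Rightarrow> nat \<Rightarrow> real) \<Rightarrow> (nat \<Rightarrow> real) set" where
  "polyQ m d A = {z. (\<forall>i\<ge>d+1. z i = 0) \<and>
      (\<forall>r<m. (\<Sum>j<d. A r j * (z j - (if j = 0 then z d else 0))) \<le> 1) \<and>
      -1 \<le> z 0 + z d \<and> z 0 + z d \<le> 1}"

end

theory Submission
  imports Defs
begin

lemma cp_mem: "f \<in> crosspolytope d \<longleftrightarrow> f = (\<lambda>_. 0) \<or> (\<exists>i<d. f = unitv i \<or> f = (\<lambda>j. - unitv i j))"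
  by (auto simp: crosspolytope_def)

lemma key:
  fixes z :: "nat \<Rightarrow> int"
  assumes d: "d \<ge> 1" and z: "\<forall>i\<ge>d+1. z i = 0"
  shows "((\<lambda>j. if j<d then z j - (if j=0 then z d else 0) else 0) \<in> crosspolytope d
          \<and> -1 \<le> z 0 + z d \<and> z 0 + z d \<le> 1) \<longleftrightarrow> z \<in> crosspolytope (d+1)"
    (is "(?w \<in> _ \<and> _) \<longleftrightarrow> _")
proof
  assume H: "?w \<in> crosspolytope d \<and> -1 \<le> z 0 + z d \<and> z 0 + z d \<le> 1"
  have hw: "\<And>j. j < d \<Longrightarrow> z j - (if j=0 then z d else 0) = ?w j" by simp
  from H consider "?w = (\<lambda>_. 0)" | i where "i<d" "?w = unitv i"
    | i where "i<d" "?w = (\<lambda>j. - unitv i j)" unfolding cp_mem by blast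
  then show "z \<in> crosspolytope (d+1)"
  proof cases
    case 1
    have a: "\<And>j. j<d \<Longrightarrow> z j - (if j=0 then z d else 0) = 0" using hw 1 by metis
    from a[of 0] d have "z 0 = z d" by simp
    with H have "z 0 = 0" by linarith
    with \<open>z 0 = z d\<close> have "z d = 0" by simp
    have "z = (\<lambda>_. 0)"
    proof
      fix j show "z j = 0"
        using a[of j] z \<open>z 0 = 0\<close> \<open>z d = 0\<close>
        by (cases "j < d"; cases "j = d"; cases "j = 0"; auto)
    qed
    then show ?thesis by (simp add: cp_mem)
  next
    case (2 i)
    have a: "\<And>j. j<d \<Longrightarrow> z j - (if j=0 then z d else 0) = (if j = i then 1 else 0)"
      using hw 2 unfolding unitv_def by metis
    show ?thesis
    proof (cases "i = 0")
      case True
      from a[of 0] d True have e: "z 0 - z d = 1" by simp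
      have "z = unitv 0 \<or> z = (\<lambda>j. - unitv d j)"
      proof (cases "z 0 = 1")
        case True
        have zd0: "z d = 0" using e True by simp
        have "z = unitv 0"
        proof
          fix j show "z j = unitv 0 j"
            using a[of j] z True zd0 \<open>i = 0\<close> unfolding unitv_def
            by (cases "j < d"; cases "j = d"; cases "j = 0"; auto)
        qed
        then show ?thesis by simp
      next
        case False
        with e H have "z 0 = 0" "z d = -1" by linarith+
        have "z = (\<lambda>j. - unitv d j)"
        proof
          fix j show "z j = - unitv d j"
            using a[of j] z \<open>z 0 = 0\<close> \<open>z d = -1\<close> \<open>i = 0\<close> d unfolding unitv_def
            by (cases "j < d"; cases "j = d"; cases "j = 0"; auto)
        qed
        then show ?thesis by simp
      qed
      then show ?thesis unfolding cp_mem using d by auto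
    next
      case False
      from a[of 0] d False have "z 0 = z d" by simp
      with H have "z 0 = 0" by linarith
      with \<open>z 0 = z d\<close> have "z d = 0" by simp
      have "z = unitv i"
      proof
        fix j show "z j = unitv i j"
          using a[of j] z \<open>z 0 = 0\<close> \<open>z d = 0\<close> \<open>i<d\<close> False unfolding unitv_def
          by (cases "j < d"; cases "j = d"; cases "j = 0"; auto)
      qed
      moreover have "i < d+1" using \<open>i<d\<close> by simp
      ultimately show ?thesis unfolding cp_mem by blast
    qed
  next
    case (3 i)
    have a: "\<And>j. j<d \<Longrightarrow> z j - (if j=0 then z d else 0) = (if j = i then -1 else 0)"
    proof -
      fix j assume "j < d"
      have "?w j = - unitv i j" using 3 by metis
      then show "z j - (if j=0 then z d else 0) = (if j = i then -1 else 0)"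
        using \<open>j<d\<close> unfolding unitv_def by (auto split: if_splits)
    qed
    show ?thesis
    proof (cases "i = 0")
      case True
      from a[of 0] d True have e: "z 0 - z d = -1" by simp
      have "z = (\<lambda>j. - unitv 0 j) \<or> z = unitv d"
      proof (cases "z 0 = -1")
        case True
        have zd0: "z d = 0" using e True by simp
        have "z = (\<lambda>j. - unitv 0 j)"
        proof
          fix j show "z j = - unitv 0 j"
            using a[of j] z True zd0 \<open>i = 0\<close> unfolding unitv_def
            by (cases "j < d"; cases "j = d"; cases "j = 0"; auto)
        qed
        then show ?thesis by simp
      next
        case False
        with e H have "z 0 = 0" "z d = 1" by linarith+
        have "z = unitv d"
        proof
          fix j show "z j = unitv d j"
            using a[of j] z \<open>z 0 = 0\<close> \<open>z d = 1\<close> \<open>i = 0\<close> d unfolding unitv_def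
            by (cases "j < d"; cases "j = d"; cases "j = 0"; auto)
        qed
        then show ?thesis by simp
      qed
      then show ?thesis unfolding cp_mem using d by auto
    next
      case False
      from a[of 0] d False have "z 0 = z d" by simp
      with H have "z 0 = 0" by linarith
      with \<open>z 0 = z d\<close> have "z d = 0" by simp
      have "z = (\<lambda>j. - unitv i j)"
      proof
        fix j show "z j = - unitv i j"
          using a[of j] z \<open>z 0 = 0\<close> \<open>z d = 0\<close> \<open>i<d\<close> False unfolding unitv_def
          by (cases "j < d"; cases "j = d"; cases "j = 0"; auto)
      qed
      moreover have "i < d+1" using \<open>i<d\<close> by simp
      ultimately show ?thesis unfolding cp_mem by blast
    qed
  qed
next
  assume "z \<in> crosspolytope (d+1)"
  then consider "z = (\<lambda>_. 0)" | i where "i<d+1" "z = unitv i"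
    | i where "i<d+1" "z = (\<lambda>j. - unitv i j)" unfolding cp_mem by blast
  then show "?w \<in> crosspolytope d \<and> -1 \<le> z 0 + z d \<and> z 0 + z d \<le> 1"
  proof cases
    case 1
    have "?w = (\<lambda>_. 0)" using 1 by auto
    then have "?w \<in> crosspolytope d" unfolding cp_mem by blast
    then show ?thesis using 1 by simp
  next
    case (2 i)
    show ?thesis
    proof (cases "i = d")
      case True
      have "?w = (\<lambda>j. - unitv 0 j)" using 2 True d unfolding unitv_def by auto
      moreover have "(0::nat) < d" using d by simp
      ultimately have "?w \<in> crosspolytope d" unfolding cp_mem by blast
      moreover have "z 0 = 0" "z d = 1" using 2 True d by (auto simp: unitv_def)
      ultimately show ?thesis by simp
    next
      case False
      then have "?w = unitv i" using 2 d unfolding unitv_def by auto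
      moreover have "i < d" using 2 False by simp
      ultimately have "?w \<in> crosspolytope d" unfolding cp_mem by blast
      moreover have "z 0 + z d \<in> {0, 1}" using 2 False d by (auto simp: unitv_def)
      ultimately show ?thesis by auto
    qed
  next
    case (3 i)
    show ?thesis
    proof (cases "i = d")
      case True
      have "?w = unitv 0" using 3 True d unfolding unitv_def by auto
      moreover have "(0::nat) < d" using d by simp
      ultimately have "?w \<in> crosspolytope d" unfolding cp_mem by blast
      moreover have "z 0 = 0" "z d = -1" using 3 True d by (auto simp: unitv_def)
      ultimately show ?thesis by simp
    next
      case False
      then have "?w = (\<lambda>j. - unitv i j)" using 3 d unfolding unitv_def by auto
      moreover have "i < d" using 3 False by simp
      ultimately have "?w \<in> crosspolytope d" unfolding cp_mem by blast
      moreover have "z 0 + z d \<in> {0, -1}" using 3 False d by (auto simp: unitv_def)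
      ultimately show ?thesis by auto
    qed
  qed
qed

theorem lemma5p3:
  fixes d m :: nat and A :: "nat \<Rightarrow> nat \<Rightarrow> real"
  assumes "d \<ge> 1"
    and "lattice_points d (polyP m d A) = crosspolytope d"
  shows "lattice_points (d+1) (polyQ m d A) = crosspolytope (d+1)"
proof (rule set_eqI)
  fix z :: "nat \<Rightarrow> int"
  define w where "w = (\<lambda>j. if j<d then z j - (if j=0 then z d else 0) else 0)"
  have sums: "\<And>r. (\<Sum>j<d. A r j * real_of_int (w j)) =
     (\<Sum>j<d. A r j * (real_of_int (z j) - (if j = 0 then real_of_int (z d) else 0)))"
    by (rule sum.cong) (auto simp: w_def)
  have "w \<in> lattice_points d (polyP m d A) \<longleftrightarrow>
        (\<forall>r<m. (\<Sum>j<d. A r j * (real_of_int (z j) - (if j = 0 then real_of_int (z d) else 0))) \<le> 1)"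
    unfolding lattice_points_def polyP_def using sums by (auto simp: w_def)
  then have "z \<in> lattice_points (d+1) (polyQ m d A) \<longleftrightarrow>
     (\<forall>i\<ge>d+1. z i = 0) \<and> w \<in> crosspolytope d \<and> -1 \<le> z 0 + z d \<and> z 0 + z d \<le> 1"
    using assms(2) unfolding lattice_points_def polyQ_def by auto
  also have "\<dots> \<longleftrightarrow> z \<in> crosspolytope (d+1)"
  proof
    assume "(\<forall>i\<ge>d+1. z i = 0) \<and> w \<in> crosspolytope d \<and> -1 \<le> z 0 + z d \<and> z 0 + z d \<le> 1"
    then show "z \<in> crosspolytope (d+1)" using key[OF assms(1), of z] unfolding w_def by blast
  next
    assume h: "z \<in> crosspolytope (d+1)"
    have "\<forall>i\<ge>d+1. z i = 0" using h unfolding cp_mem by (auto simp: unitv_def)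
    then show "(\<forall>i\<ge>d+1. z i = 0) \<and> w \<in> crosspolytope d \<and> -1 \<le> z 0 + z d \<and> z 0 + z d \<le> 1"
      using key[OF assms(1), of z] h unfolding w_def by blast
  qed
  finally show "z \<in> lattice_points (d+1) (polyQ m d A) \<longleftrightarrow> z \<in> crosspolytope (d+1)" .
qed

end
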